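(* Let $\Delta\ge3$. The problem $\Pi^{\mathsf{orcx}}$ cannot be solved in $0$ rounds in the (deterministic) port-numbering model on $\Delta$-regular graphs, even if a proper $\Delta$-edge coloring with colors $1,\dots,\Delta$ is given as input.
   Context: Node-edge-checkable problems label the half-edges of a $\Delta$-regular graph. The node constraint lists the allowed multisets of the $\Delta$ labels at a node, and the edge constraint lists the allowed multisets of the two labels on an edge. In the port-numbering model each node has a numbering $1,\dots,\Delta$ of its incident edges and no identifiers. A $0$-round algorithm chooses labels for its incident half-edges as a function of its port numbering and the input colors on its incident edges only. $\Pi^{\mathsf{orcx}}$ has labels $\Sigma_1\cup\Sigma_2$ with $\Sigma_1=\{\mathsf O,\mathsf R,\mathsf C,\mathsf X\}$ and $\Sigma_2=\{\mathsf o,\mathsf r,\mathsf c,\mathsf x\}$. Its node configurations are the $L_1\dots L_\Delta$ such that: - exactly one $L_k$ lies in $\Sigma_1$; and - there are distinct $k,k'$ with all other $L_{k''}\in\{\mathsf O,\mathsf o\}$, and either ($L_k\in\{\mathsf X,\mathsf x\}$ and $L_{k'}\in\{\mathsf O,\mathsf o\}$) or ($L_k\in\{\mathsf R,\mathsf r\}$ and $L_{k'}\in\{\mathsf C,\mathsf c\}$). Its edge configurations are all configurations in $[\mathsf O]\,[\mathsf O\mathsf R\mathsf C\mathsf X]$, $[\mathsf O\mathsf R]\,[\mathsf O\mathsf R]$, $[\mathsf O\mathsf C]\,[\mathsf O\mathsf C]$, $[\mathsf o]\,[\mathsf o\mathsf r\mathsf c\mathsf x]$ and $[\mathsf o\mathsf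 r]\,[\mathsf o\mathsf c]$, where $[S]\,[S']$ denotes all pairs with one entry from $S$ and the other from $S'$. *)

theory Defs
  imports Main
begin

text \<open>Labels: Sigma_1 = {O,R,C,X} (suffix 1), Sigma_2 = {o,r,c,x} (suffix 2).\<close>
datatype label = O1 | R1 | C1 | X1 | o2 | r2 | c2 | x2

definition in_Sigma1 :: "label \<Rightarrow> bool" where
  "in_Sigma1 l \<longleftrightarrow> l \<in> {O1, R1, C1, X1}"

text \<open>Node constraint of Pi^orcx on the labels L_1..L_Delta (list of length Delta,
  indices 0..Delta-1; the condition is invariant under permutation, i.e. a
  condition on the multiset).\<close>
definition orcx_node_ok :: "label list \<Rightarrow> bool" where
  "orcx_node_ok L \<longleftrightarrow>
     card {k. k < length L \<and> in_Sigma1 (L ! k)} = 1 \<and>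
     (\<exists>k k'. k < length L \<and> k' < length L \<and> k \<noteq> k' \<and>
        (\<forall>k''. k'' < length L \<and> k'' \<noteq> k \<and> k'' \<noteq> k' \<longrightarrow> L ! k'' \<in> {O1, o2}) \<and>
        ((L ! k \<in> {X1, x2} \<and> L ! k' \<in> {O1, o2}) \<or>
         (L ! k \<in> {R1, r2} \<and> L ! k' \<in> {C1, c2})))"

text \<open>[S][S']: one entry from S, the other from S' (unordered).\<close>
definition pair_in :: "label set \<Rightarrow> label set \<Rightarrow> label \<Rightarrow> label \<Rightarrow> bool" where
  "pair_in S S' a b \<longleftrightarrow> (a \<in> S \<and> b \<in> S') \<or> (b \<in> S \<and> a \<in> S')"

definition orcx_edge_ok :: "label \<Rightarrow> label \<Rightarrow> bool" where
  "orcx_edge_ok a b \<longleftrightarrow>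
     pair_in {O1} {O1, R1, C1, X1} a b \<or>
     pair_in {O1, R1} {O1, R1} a b \<or>
     pair_in {O1, C1} {O1, C1} a b \<or>
     pair_in {o2} {o2, r2, c2, x2} a b \<or>
     pair_in {o2, r2} {o2, c2} a b"

text \<open>For v in V and port i < Delta, nbr v i is the
  neighbour reached through port i, and back v i is the port number of that edge
  at the neighbour.\<close>
definition port_graph :: "nat \<Rightarrow> nat set \<Rightarrow> (nat \<Rightarrow> nat \<Rightarrow> nat) \<Rightarrow> (nat \<Rightarrow> nat \<Rightarrow> nat) \<Rightarrow> bool" where
  "port_graph \<Delta> V nbr back \<longleftrightarrow> finite V \<and>
     (\<forall>v\<in>V. \<forall>i<\<Delta>.
        nbr v i \<in> V \<and> back v i < \<Delta> \<and>
        nbr (nbr v i) (back v i) = v \<and> back (nbr v i) (back v i) = i \<and>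
        nbr v i \<noteq> v) \<and>
     (\<forall>v\<in>V. inj_on (nbr v) {..<\<Delta>})"

text \<open>Proper Delta-edge colouring with colours 1..Delta, given on half-edges
  (both half-edges of an edge get the colour of the edge).\<close>
definition proper_edge_coloring :: "nat \<Rightarrow> nat set \<Rightarrow> (nat \<Rightarrow> nat \<Rightarrow> nat) \<Rightarrow> (nat \<Rightarrow> nat \<Rightarrow> nat) \<Rightarrow> (nat \<Rightarrow> nat \<Rightarrow> nat) \<Rightarrow> bool" where
  "proper_edge_coloring \<Delta> V nbr back col \<longleftrightarrow>
     (\<forall>v\<in>V. \<forall>i<\<Delta>. col v i \<in> {1..\<Delta>} \<and> col (nbr v i) (back v i) = col v i) \<and>
     (\<forall>v\<in>V. inj_on (col v) {..<\<Delta>})"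

text \<open>A 0-round algorithm: maps the list of input colours at ports 0..Delta-1 of a
  node to a label for each port. Output of node v on its port i:\<close>
definition zero_round_output :: "nat \<Rightarrow> (nat list \<Rightarrow> nat \<Rightarrow> label) \<Rightarrow> (nat \<Rightarrow> nat \<Rightarrow> nat) \<Rightarrow> nat \<Rightarrow> nat \<Rightarrow> label" where
  "zero_round_output \<Delta> A col v i = A (map (col v) [0..<\<Delta>]) i"

definition solves_orcx :: "nat \<Rightarrow> (nat list \<Rightarrow> nat \<Rightarrow> label) \<Rightarrow> bool" where
  "solves_orcx \<Delta> A \<longleftrightarrow>
     (\<forall>V nbr back col. port_graph \<Delta> V nbr back \<and> proper_edge_coloring \<Delta> V nbr back col \<longrightarrow>
        (\<forall>v\<in>V. orcx_node_ok (map (zero_round_output \<Delta> A col v) [0..<\<Delta>])) \<and>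
        (\<forall>v\<in>V. \<forall>i<\<Delta>. orcx_edge_ok (zero_round_output \<Delta> A col v i)
                                    (zero_round_output \<Delta> A col (nbr v i) (back v i))))"

end

theory Submission
  imports Defs
begin

definition gg :: "nat \<Rightarrow> nat \<Rightarrow> nat \<Rightarrow> nat" where
  "gg D a i = (if a \<le> i then i - a else i + D - a)"

definition nb :: "nat \<Rightarrow> nat \<Rightarrow> nat \<Rightarrow> nat" where
  "nb D v i = (if v < D then D + gg D v i else gg D (v - D) i)"

lemma gg_lt: "a < D \<Longrightarrow> i < D \<Longrightarrow> gg D a i < D"
  by (auto simp: gg_def)

lemma gg_inv: "a < D \<Longrightarrow> i < D \<Longrightarrow> gg D (gg D a i) i = a"
  by (auto simp: gg_def)

lemma gg_inj: "a < D \<Longrightarrow> inj_on (gg D a) {..<D}"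
  by (auto simp: inj_on_def gg_def split: if_splits)

lemma pg: "port_graph D {..<2*D} (nb D) (\<lambda>v i. i)"
  unfolding port_graph_def
proof (intro conjI ballI allI impI)
  show "finite {..<2*D}" by simp
next
  fix v i assume v: "v \<in> {..<2*D}" and i: "i < D"
  have "v - D < D" if "\<not> v < D" using v that by auto
  then show "nb D v i \<in> {..<2*D}" using v i gg_lt[of v D i] gg_lt[of "v - D" D i]
    by (fastforce simp: nb_def)
  show "i < D" by fact
  show "nb D (nb D v i) i = v" using v i gg_lt[of v D i] gg_lt[of "v - D" D i]
      gg_inv[of v D i] gg_inv[of "v - D" D i]
    by (auto simp: nb_def)
  show "i = i" by simp
  show "nb D v i \<noteq> v" using v i gg_lt[of v D i] gg_lt[of "v - D" D i] \<open>\<not> v < D \<Longrightarrow> v - D < D\<close>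
    by (auto simp: nb_def)
next
  fix v assume v: "v \<in> {..<2*D}"
  show "inj_on (nb D v) {..<D}"
  proof (cases "v < D")
    case True
    then show ?thesis using gg_inj[of v D] by (auto simp: inj_on_def nb_def)
  next
    case False
    then have "v - D < D" using v by auto
    then show ?thesis using False gg_inj[of "v - D" D] by (auto simp: inj_on_def nb_def)
  qed
qed

lemma pc: "proper_edge_coloring D {..<2*D} (nb D) (\<lambda>v i. i) (\<lambda>v i. i + 1)"
  unfolding proper_edge_coloring_def by (auto simp: inj_on_def)

lemma self_ok: "orcx_edge_ok l l \<Longrightarrow> l \<in> {O1, R1, C1, o2}"
  by (cases l) (auto simp: orcx_edge_ok_def pair_in_def)

theorem mainTheorem19:
  fixes \<Delta> :: nat
  assumes "\<Delta> \<ge> 3"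
  shows "\<not> (\<exists>A. solves_orcx \<Delta> A)"
proof
  assume "\<exists>A. solves_orcx \<Delta> A"
  then obtain A where A: "solves_orcx \<Delta> A" by blast
  define lst where "lst = map (\<lambda>i. i + 1) [0..<\<Delta>]"
  define L where "L = map (A lst) [0..<\<Delta>]"
  have out: "zero_round_output \<Delta> A (\<lambda>v i. i + 1) v i = A lst i" for v i
    by (simp add: zero_round_output_def lst_def)
  have z: "0 \<in> {..<2*\<Delta>}" using assms by simp
  have S: "(\<forall>v\<in>{..<2*\<Delta>}. orcx_node_ok (map (zero_round_output \<Delta> A (\<lambda>v i. i + 1) v) [0..<\<Delta>])) \<and>
        (\<forall>v\<in>{..<2*\<Delta>}. \<forall>i<\<Delta>. orcx_edge_ok (zero_round_output \<Delta> A (\<lambda>v i. i + 1) v i)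
                                    (zero_round_output \<Delta> A (\<lambda>v i. i + 1) (nb \<Delta> v i) i))"
    using A pg[of \<Delta>] pc[of \<Delta>] unfolding solves_orcx_def by blast
  have node: "orcx_node_ok L" using conjunct1[OF S, rule_format, OF z] unfolding L_def lst_def zero_round_output_def by simp
  have edge: "\<And>i. i < \<Delta> \<Longrightarrow> orcx_edge_ok (A lst i) (A lst i)"
    using conjunct2[OF S, rule_format, OF z] unfolding lst_def zero_round_output_def by simp
  have len: "length L = \<Delta>" by (simp add: L_def)
  have Li: "\<And>i. i < \<Delta> \<Longrightarrow> L ! i \<in> {O1, R1, C1, o2}"
    using edge self_ok by (simp add: L_def)
  from node obtain k k' where kk: "k < \<Delta>" "k' < \<Delta>" "k \<noteq> k'"
    and cs: "(L ! k \<in> {X1, x2} \<and> L ! k' \<in> {O1, o2}) \<or>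
         (L ! k \<in> {R1, r2} \<and> L ! k' \<in> {C1, c2})"
    and card: "card {k. k < \<Delta> \<and> in_Sigma1 (L ! k)} = 1"
    unfolding orcx_node_ok_def len by blast
  have "L ! k = R1" "L ! k' = C1" using cs Li[OF kk(1)] Li[OF kk(2)] by auto
  then have "{k, k'} \<subseteq> {k. k < \<Delta> \<and> in_Sigma1 (L ! k)}"
    using kk by (auto simp: in_Sigma1_def)
  then have "card {k, k'} \<le> card {k. k < \<Delta> \<and> in_Sigma1 (L ! k)}"
    by (intro card_mono) auto
  then show False using card kk by simp
qed

end
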